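(* Let $r\in\mathbb{C}$, let $\pi\in\mathrm{SL}_2(\mathbb{R})$ be parabolic with unique fixed point $\mathfrak a\in\mathbb{P}^1(\mathbb{R})$, and let $\lambda\in\mathbb{C}^*$. If $h\in\mathcal{D}^{\mathrm{fs}}_{2-r}$ satisfies $\lambda^{-1}h|_{2-r}\pi-h\in\mathcal{D}^\omega_{2-r}$, then $\mathrm{bsing}\,h\subset\{\mathfrak a\}$.
   Context: $\mathbb{H}^-$ is the lower half-plane. For $g=\begin{pmatrix}a&b\\c&d\end{pmatrix}\in\mathrm{SL}_2(\mathbb{R})$ and a function $\varphi$ on $\mathbb{H}^-$, $(\varphi|_{2-r}g)(t)=(ct+d)^{r-2}\varphi(gt)$ with $\arg(ct+d)\in[-\pi,\pi)$. Let $P\varphi(t)=(i-t)^{2-r}\varphi(t)$ with $\arg(i-t)\in(-\pi/2,3\pi/2)$. $\mathcal{D}^\omega_{2-r}$: holomorphic $\varphi$ on $\mathbb{H}^-$ such that $P\varphi$ extends holomorphically to an open neighbourhood of $\mathbb{H}^-\cup\mathbb{P}^1(\mathbb{R})$ in $\mathbb{P}^1(\mathbb{C})$. For finite $E\subset\mathbb{P}^1(\mathbb{R})$, $\mathcal{D}^\omega_{2-r}[E]$: holomorphic $\varphi$ on $\mathbb{H}^-$ such that $P\varphi$ extends holomorphically to an open subset of $\mathbb{P}^1(\mathbb{C})$ containing $\mathbb{H}^-\cup(\mathbb{P}^1(\mathbb{R})\setminus E)$; $\mathcal{D}^{\mathrm{fs}}_{2-r}$ is the union over all finite $E$. For $\varphi\in\mathcal{D}^{\mathrm{fs}}_{2-r}$,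 $\mathrm{bsing}\,\varphi$ is the minimal finite set $E$ with $\varphi\in\mathcal{D}^\omega_{2-r}[E]$ (elements are identified with their restrictions to $\mathbb{H}^-$). *)

theory Defs
  imports "HOL-Complex_Analysis.Complex_Analysis"
begin

definition Hm :: "complex set" where
  "Hm = {t. Im t < 0}"

definition arg_lo :: "complex \<Rightarrow> real" where
  "arg_lo z = (if Arg z = pi then - pi else Arg z)"

definition pow_lo :: "complex \<Rightarrow> complex \<Rightarrow> complex" where
  "pow_lo z s = (if z = 0 then 0
     else exp (s * (complex_of_real (ln (cmod z)) + \<i> * complex_of_real (arg_lo z))))"

definition slash :: "complex \<Rightarrow> real \<Rightarrow> real \<Rightarrow> real \<Rightarrow> real \<Rightarrow> (complex \<Rightarrow> complex) \<Rightarrow> complex \<Rightarrow> complex" where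
  "slash r a b c d \<phi> t =
     pow_lo (of_real c * t + of_real d) (r - 2) *
     \<phi> ((of_real a * t + of_real b) / (of_real c * t + of_real d))"

text \<open>P phi (t) = (i - t)^(2-r) phi(t); on Hm, i - t has argument in (0, pi), so the
  principal branch agrees with the branch arg in (-pi/2, 3pi/2).\<close>
definition Pf :: "complex \<Rightarrow> (complex \<Rightarrow> complex) \<Rightarrow> complex \<Rightarrow> complex" where
  "Pf r \<phi> t = (\<i> - t) powr (2 - r) * \<phi> t"

text \<open>P^1(R) is modelled as real option (None = infinity).
  D^omega_{2-r}[E]: phi holomorphic on Hm and P phi extends holomorphically to an open subset
  of P^1(C) containing Hm and P^1(R) - E.  The part of the open set in C is U; if infinity is
  not in E the extension is holomorphic at infinity (chart w = -1/t).\<close>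
definition DomegaE :: "complex \<Rightarrow> real option set \<Rightarrow> (complex \<Rightarrow> complex) \<Rightarrow> bool" where
  "DomegaE r E \<phi> \<longleftrightarrow> \<phi> holomorphic_on Hm \<and>
     (\<exists>U F. open U \<and> Hm \<subseteq> U \<and> (\<forall>x. Some x \<notin> E \<longrightarrow> complex_of_real x \<in> U) \<and>
        F holomorphic_on U \<and> (\<forall>t\<in>Hm. F t = Pf r \<phi> t) \<and>
        (None \<notin> E \<longrightarrow> (\<exists>\<epsilon>>0. \<exists>G. G holomorphic_on ball 0 \<epsilon> \<and>
            (\<forall>w\<in>ball 0 \<epsilon> - {0}. - 1 / w \<in> U \<and> G w = F (- 1 / w)))))"

definition Domega :: "complex \<Rightarrow> (complex \<Rightarrow> complex) \<Rightarrow> bool" where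
  "Domega r \<phi> \<longleftrightarrow> DomegaE r {} \<phi>"

definition Dfs :: "complex \<Rightarrow> (complex \<Rightarrow> complex) \<Rightarrow> bool" where
  "Dfs r \<phi> \<longleftrightarrow> (\<exists>E. finite E \<and> DomegaE r E \<phi>)"

definition bsing :: "complex \<Rightarrow> (complex \<Rightarrow> complex) \<Rightarrow> real option set" where
  "bsing r \<phi> = (THE E. finite E \<and> DomegaE r E \<phi> \<and>
                   (\<forall>E'. finite E' \<and> DomegaE r E' \<phi> \<longrightarrow> E \<subseteq> E'))"

definition fixed_P1R :: "real \<Rightarrow> real \<Rightarrow> real \<Rightarrow> real \<Rightarrow> real option \<Rightarrow> bool" where
  "fixed_P1R a b c d p = (case p of None \<Rightarrow> c = 0
                                   | Some x \<Rightarrow> c * x\<^sup>2 + (d - a) * x - b = 0)"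

definition parabolic :: "real \<Rightarrow> real \<Rightarrow> real \<Rightarrow> real \<Rightarrow> bool" where
  "parabolic a b c d \<longleftrightarrow> a * d - b * c = 1 \<and> \<bar>a + d\<bar> = 2 \<and>
     \<not> (a = d \<and> b = 0 \<and> c = 0)"

end

theory Submission
  imports Defs
begin


definition chart :: "real option \<Rightarrow> complex \<Rightarrow> complex" where
  "chart p w = (case p of None \<Rightarrow> -1/w | Some x \<Rightarrow> of_real x + w)"

definition reg :: "complex \<Rightarrow> (complex \<Rightarrow> complex) \<Rightarrow> real option \<Rightarrow> bool" where
  "reg r \<phi> p \<longleftrightarrow> (\<exists>e>0. \<exists>G. G holomorphic_on ball 0 e \<and>
      (\<forall>w\<in>ball 0 e. Im w < 0 \<longrightarrow> G w = Pf r \<phi> (chart p w)))"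

definition mob :: "real \<Rightarrow> real \<Rightarrow> real \<Rightarrow> real \<Rightarrow> real option \<Rightarrow> real option" where
  "mob a b c d p = (case p of None \<Rightarrow> if c = 0 then None else Some (a/c)
     | Some x \<Rightarrow> if c*x+d = 0 then None else Some ((a*x+b)/(c*x+d)))"

lemma orbit_finite:
  fixes f :: "'a \<Rightarrow> 'a" and H :: "'a \<Rightarrow> real"
  assumes step: "\<And>p. p \<noteq> aa \<Longrightarrow> f p \<noteq> aa \<and> H (f p) = H p + \<delta>"
    and "\<delta> \<noteq> 0" and "finite S" and cl: "\<And>p. p \<in> S \<Longrightarrow> f p \<in> S"
  shows "S \<subseteq> {aa}"
proof
  fix p assume pS: "p \<in> S"
  show "p \<in> {aa}"
  proof (rule ccontr)
    assume "p \<notin> {aa}"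
    hence pa: "p \<noteq> aa" by simp
    have inv: "(f^^n) p \<noteq> aa \<and> H ((f^^n) p) = H p + real n * \<delta>" for n
    proof (induction n)
      case 0 then show ?case using pa by simp
    next
      case (Suc n) then show ?case using step[of "(f^^n) p"] by (simp add: algebra_simps)
    qed
    have inS: "(f^^n) p \<in> S" for n
      by (induction n) (use pS cl in auto)
    have "inj (\<lambda>n. (f^^n) p)"
    proof (rule injI)
      fix m n assume "(f^^m) p = (f^^n) p"
      hence "H p + real m * \<delta> = H p + real n * \<delta>" using inv[of m] inv[of n] by metis
      hence "real m = real n" using \<open>\<delta> \<noteq> 0\<close> by auto
      thus "m = n" by simp
    qed
    hence "infinite (range (\<lambda>n. (f^^n) p))" by (simp add: range_inj_infinite)
    moreover have "range (\<lambda>n. (f^^n) p) \<subseteq> S" using inS by auto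
    ultimately show False using \<open>finite S\<close> finite_subset by blast
  qed
qed

lemma parabolic_orbit:
  assumes det: "a * d - b * c = 1" and par: "parabolic a b c d"
    and fx: "fixed_P1R a b c d aa" and uq: "\<forall>p. fixed_P1R a b c d p \<longrightarrow> p = aa"
  shows "\<exists>(H::real option \<Rightarrow> real) \<delta>. \<delta> \<noteq> 0 \<and> (\<forall>p. p \<noteq> aa \<longrightarrow> mob a b c d p \<noteq> aa \<and> H (mob a b c d p) = H p + \<delta>)"
proof -
  have tr: "(a+d)^2 = 4" using par unfolding parabolic_def
    by (metis abs_numeral power2_abs power2_eq_square real_sqrt_abs2 real_sqrt_mult_self numeral_times_numeral semiring_norm(12) semiring_norm(13))
  show ?thesis
  proof (cases "c = 0")
    case True
    have ad: "a * d = 1" using det True by simp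
    have "(a - d)^2 = 0" using tr ad by (simp add: power2_eq_square algebra_simps)
    hence aeqd: "a = d" by simp
    have b0: "b \<noteq> 0" using par True aeqd unfolding parabolic_def by auto
    have d0: "d \<noteq> 0" using ad by auto
    have aa: "aa = None" using uq[rule_format, of None] True by (simp add: fixed_P1R_def)
    show ?thesis
    proof (rule exI[where x="\<lambda>p. case p of None \<Rightarrow> 0 | Some x \<Rightarrow> (x::real)"], rule exI[where x="b/d"], intro conjI allI impI)
      show "b/d \<noteq> 0" using b0 d0 by simp
      fix p assume "p \<noteq> aa"
      then obtain x where p: "p = Some x" using aa by (cases p) auto
      show "mob a b c d p \<noteq> aa" using p aa True d0 by (simp add: mob_def)
      show "(case mob a b c d p of None \<Rightarrow> 0 | Some x \<Rightarrow> x) = (case p of None \<Rightarrow> 0 | Some x \<Rightarrow> x) + b/d"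
        using p True d0 aeqd by (simp add: mob_def field_simps)
    qed
  next
    case False
    define x0 where "x0 = (a-d)/(2*c)"
    define e where "e = (a+d)/2"
    have e2: "e*e = 1" using tr by (simp add: e_def power2_eq_square field_simps)
    have h2: "a*a + d*d + 2*(b*c) = 2" using tr det by (simp add: power2_eq_square algebra_simps)
    have fx0: "fixed_P1R a b c d (Some x0)"
    proof -
      have "c * x0^2 + (d - a) * x0 - b = ((a-d)^2 - 2*(a-d)^2 - 4*b*c)/(4*c)"
        using False by (simp add: x0_def power2_eq_square field_simps)
      also have "(a-d)^2 - 2*(a-d)^2 - 4*b*c = 2*(a*d) - (a*a+d*d+2*(b*c)) - 2*(b*c)" by (simp add: power2_eq_square algebra_simps)
      also have "\<dots> = 0" using h2 det by simp
      finally show ?thesis by (simp add: fixed_P1R_def)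
    qed
    have aa: "aa = Some x0" using uq fx0 by simp
    have e0: "e \<noteq> 0" using e2 by auto
    have cx0: "c*x0 + d = e" and ax0: "a - c*x0 = e" using False by (simp_all add: x0_def e_def field_simps)
    have bx0: "b = c*x0^2 + (d-a)*x0" using fx0 by (simp add: fixed_P1R_def)
    show ?thesis
    proof (rule exI[where x="\<lambda>p. case p of None \<Rightarrow> 0 | Some x \<Rightarrow> 1/(x-x0::real)"], rule exI[where x="c*e"], rule conjI, simp add: e0 \<open>c \<noteq> 0\<close>, intro allI impI)
      fix p assume pa: "p \<noteq> aa"
      show "mob a b c d p \<noteq> aa \<and> (case mob a b c d p of None \<Rightarrow> 0 | Some x \<Rightarrow> 1/(x-x0)) = (case p of None \<Rightarrow> 0 | Some x \<Rightarrow> 1/(x-x0)) + c*e"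
      proof (cases p)
        case None
        have "a/c - x0 = e/c" using False ax0 by (simp add: field_simps)
        then show ?thesis using None False e0 e2 aa by (simp add: mob_def field_simps)
      next
        case (Some x)
        have xx: "x \<noteq> x0" using pa Some aa by simp
        show ?thesis
        proof (cases "c*x+d = 0")
          case True
          have "x - x0 = -e/c" using True cx0 False by (simp add: field_simps)
          hence "1/(x-x0) = - c/e" using e0 False by simp
          also have "\<dots> = - c*e" proof -
            have "1/e = e" using e2 e0 by (simp add: field_simps)
            thus ?thesis by (metis divide_minus_left times_divide_eq_right mult.right_neutral)
          qed
          finally have "1/(x-x0) = - c*e" .
          then show ?thesis using Some True aa False e0 e2 by (simp add: mob_def field_simps)
        next
          case nz: False
          have num: "a*x+b - x0*(c*x+d) = e*(x-x0)" using bx0 ax0 cx0 by (simp add: power2_eq_square algebra_simps)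
          have y: "(a*x+b)/(c*x+d) - x0 = e*(x-x0)/(c*x+d)" using nz num by (simp add: field_simps)
          have yne: "(a*x+b)/(c*x+d) \<noteq> x0" using y xx e0 nz by auto
          have ie: "1/e = e" using e2 e0 by (simp add: field_simps)
          have "1/((a*x+b)/(c*x+d) - x0) = (c*x+d)/(e*(x-x0))" by (simp add: y)
          also have "\<dots> = (c*x+d)*(1/e)/(x-x0)" by simp
          also have "\<dots> = (c*x+d)*e/(x-x0)" by (simp only: ie)
          finally have "1/((a*x+b)/(c*x+d) - x0) = (c*x+d)*e/(x-x0)" .
          also have "\<dots> = c*e + e*e/(x-x0)" using xx cx0 by (simp add: field_simps) (simp add: algebra_simps flip: cx0)
          finally show ?thesis using Some nz aa yne e2 by (simp add: mob_def)
        qed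
      qed
    qed
  qed
qed



lemma open_Hm: "open Hm"
  unfolding Hm_def by (rule open_halfspace_Im_lt)

lemma convex_Hm: "convex Hm"
  unfolding Hm_def by (rule convex_halfspace_Im_lt)

lemma Im_inv: "Im (1/w) = - Im w / (cmod w)^2"
  by (simp add: Im_divide')

lemma Im_neg_inv_lt: "Im (-1/w) < 0 \<longleftrightarrow> Im w < 0"
proof (cases "w = 0")
  case False
  hence "(cmod w)^2 > 0" by simp
  thus ?thesis by (simp add: Im_inv divide_less_0_iff zero_less_divide_iff)
qed simp

lemma Im_chart: "Im (chart p w) < 0 \<longleftrightarrow> Im w < 0"
  using Im_neg_inv_lt[of w] by (cases p) (simp_all add: chart_def)

lemma not_nonpos_Im: "Im z \<noteq> 0 \<Longrightarrow> z \<notin> \<real>\<^sub>\<le>\<^sub>0"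
  by (simp add: complex_nonpos_Reals_iff)

lemma Pf_holo:
  assumes "\<phi> holomorphic_on Hm"
  shows "Pf r \<phi> holomorphic_on Hm"
proof -
  have nz: "\<And>z. z \<in> Hm \<Longrightarrow> \<i> - z \<notin> \<real>\<^sub>\<le>\<^sub>0"
    by (rule not_nonpos_Im) (simp add: Hm_def)
  have "(\<lambda>t. (\<i> - t) powr (2 - r)) holomorphic_on Hm"
    using nz by (intro holomorphic_intros) auto
  thus ?thesis unfolding Pf_def[abs_def] using assms by (rule holomorphic_on_mult)
qed

lemma char1:
  assumes "DomegaE r E \<phi>" "p \<notin> E"
  shows "reg r \<phi> p"
proof -
  obtain U F where U: "open U" "Hm \<subseteq> U" "\<forall>x. Some x \<notin> E \<longrightarrow> complex_of_real x \<in> U"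
      "F holomorphic_on U" "\<forall>t\<in>Hm. F t = Pf r \<phi> t"
      and inf: "None \<notin> E \<longrightarrow> (\<exists>\<epsilon>>0. \<exists>G. G holomorphic_on ball 0 \<epsilon> \<and>
            (\<forall>w\<in>ball 0 \<epsilon> - {0}. - 1 / w \<in> U \<and> G w = F (- 1 / w)))"
    using assms(1) unfolding DomegaE_def by blast
  show ?thesis
  proof (cases p)
    case None
    then obtain \<epsilon> G where G: "\<epsilon> > 0" "G holomorphic_on ball 0 \<epsilon>"
        "\<forall>w\<in>ball 0 \<epsilon> - {0}. - 1 / w \<in> U \<and> G w = F (- 1 / w)"
      using inf assms(2) by blast
    show ?thesis unfolding reg_def
    proof (intro exI conjI ballI impI)
      show "\<epsilon> > 0" "G holomorphic_on ball 0 \<epsilon>" by (fact G)+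
      fix w assume w: "w \<in> ball 0 \<epsilon>" "Im w < 0"
      hence "w \<noteq> 0" by auto
      hence "G w = F (-1/w)" using G(3) w by blast
      moreover have "-1/w \<in> Hm" using w Im_neg_inv_lt[of w] by (simp add: Hm_def)
      ultimately show "G w = Pf r \<phi> (chart p w)" using U(5) None by (simp add: chart_def)
    qed
  next
    case (Some x)
    hence "complex_of_real x \<in> U" using U(3) assms(2) by blast
    then obtain \<rho> where \<rho>: "\<rho> > 0" "ball (complex_of_real x) \<rho> \<subseteq> U" using U(1) openE by blast
    show ?thesis unfolding reg_def
    proof (intro exI conjI ballI impI)
      show "\<rho> > 0" by (fact \<rho>)
      have "(\<lambda>w. complex_of_real x + w) ` ball 0 \<rho> \<subseteq> U" using \<rho>(2)
        by (auto simp: dist_norm)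
      thus "(\<lambda>w. F (complex_of_real x + w)) holomorphic_on ball 0 \<rho>"
        by (intro holomorphic_on_compose_gen[unfolded o_def, OF _ U(4)] holomorphic_intros)
      fix w assume w: "w \<in> ball 0 \<rho>" "Im w < 0"
      hence "complex_of_real x + w \<in> Hm" by (simp add: Hm_def)
      thus "F (complex_of_real x + w) = Pf r \<phi> (chart p w)" using U(5) Some by (simp add: chart_def)
    qed
  qed
qed

lemma agree_conv:
  assumes "open S" "convex S" "S \<inter> Hm \<noteq> {}" "F1 holomorphic_on S" "F2 holomorphic_on S"
    "\<And>t. t \<in> S \<inter> Hm \<Longrightarrow> F1 t = F2 t" "t \<in> S"
  shows "F1 t = F2 t"
proof (rule analytic_continuation_open[of "S \<inter> Hm" S F1 F2 t])
  show "open (S \<inter> Hm)" using assms(1) open_Hm by blast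
  show "connected S" using assms(2) by (rule convex_connected)
qed (use assms in auto)

lemma balls_meet_Hm:
  assumes "t \<in> ball (complex_of_real x) r1" "t \<in> ball (complex_of_real y) r2"
  shows "ball (complex_of_real x) r1 \<inter> ball (complex_of_real y) r2 \<inter> Hm \<noteq> {}"
proof -
  define u where "u = Re t"
  have hx: "\<bar>x - u\<bar> < r1"
  proof -
    have "\<bar>x - u\<bar> = \<bar>Re (complex_of_real x - t)\<bar>" by (simp add: u_def)
    also have "\<dots> \<le> cmod (complex_of_real x - t)" by (rule abs_Re_le_cmod)
    finally show ?thesis using assms(1) by (simp add: dist_norm)
  qed
  have hy: "\<bar>y - u\<bar> < r2"
  proof -
    have "\<bar>y - u\<bar> = \<bar>Re (complex_of_real y - t)\<bar>" by (simp add: u_def)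
    also have "\<dots> \<le> cmod (complex_of_real y - t)" by (rule abs_Re_le_cmod)
    finally show ?thesis using assms(2) by (simp add: dist_norm)
  qed
  define \<delta> where "\<delta> = min (r1 - \<bar>x - u\<bar>) (r2 - \<bar>y - u\<bar>) / 2"
  have d0: "\<delta> > 0" using hx hy by (simp add: \<delta>_def)
  define z where "z = Complex u (-\<delta>)"
  have dz: "cmod (complex_of_real v - z) \<le> \<bar>v - u\<bar> + \<delta>" for v
  proof -
    have "complex_of_real v - z = complex_of_real (v - u) + Complex 0 \<delta>"
      by (simp add: z_def complex_eq_iff)
    hence "cmod (complex_of_real v - z) \<le> cmod (complex_of_real (v - u)) + cmod (Complex 0 \<delta>)"
      by (metis norm_triangle_ineq)
    thus ?thesis using d0 by (simp add: norm_complex_def)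
  qed
  have l1: "\<delta> < r1 - \<bar>x - u\<bar>" and l2: "\<delta> < r2 - \<bar>y - u\<bar>" using hx hy by (auto simp: \<delta>_def min_def)
  have "z \<in> ball (complex_of_real x) r1" using dz[of x] l1 by (simp add: dist_norm)
  moreover have "z \<in> ball (complex_of_real y) r2" using dz[of y] l2 by (simp add: dist_norm)
  moreover have "z \<in> Hm" using d0 by (simp add: z_def Hm_def)
  ultimately show ?thesis by blast
qed

lemma char2:
  assumes hol: "\<phi> holomorphic_on Hm" and R: "\<forall>p. p \<notin> E \<longrightarrow> reg r \<phi> p"
  shows "DomegaE r E \<phi>"
proof -
  define P where "P = Pf r \<phi>"
  have PH: "P holomorphic_on Hm" unfolding P_def using hol by (rule Pf_holo)
  have "\<forall>x. \<exists>e G. Some x \<notin> E \<longrightarrow> e > 0 \<and> G holomorphic_on ball 0 e \<and>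
          (\<forall>w\<in>ball 0 e. Im w < 0 \<longrightarrow> G w = P (complex_of_real x + w))"
  proof
    fix x show "\<exists>e G. Some x \<notin> E \<longrightarrow> e > 0 \<and> G holomorphic_on ball 0 e \<and>
          (\<forall>w\<in>ball 0 e. Im w < 0 \<longrightarrow> G w = P (complex_of_real x + w))"
      using R[rule_format, of "Some x"] unfolding reg_def chart_def P_def by auto
  qed
  then obtain ee GG where EG: "\<And>x. Some x \<notin> E \<Longrightarrow> ee x > 0 \<and> GG x holomorphic_on ball 0 (ee x) \<and>
          (\<forall>w\<in>ball 0 (ee x). Im w < 0 \<longrightarrow> GG x w = P (complex_of_real x + w))"
    by metis
  have "\<exists>e G. None \<notin> E \<longrightarrow> e > 0 \<and> G holomorphic_on ball 0 e \<and>
          (\<forall>w\<in>ball 0 e. Im w < 0 \<longrightarrow> G w = P (-1/w))"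
    using R[rule_format, of None] unfolding reg_def chart_def P_def by auto
  then obtain ei Gi where EGi: "None \<notin> E \<Longrightarrow> ei > 0 \<and> Gi holomorphic_on ball 0 ei \<and>
          (\<forall>w\<in>ball 0 ei. Im w < 0 \<longrightarrow> Gi w = P (-1/w))"
    by blast
  define R0 where "R0 = 1/ei"
  define Gf where "Gf t = Gi (-1/t)" for t
  define V where "V = (if None \<notin> E then {t. R0 + 2 < cmod t} else {})"
  define X where "X = {x. Some x \<notin> E}"
  define rho where "rho x = min (ee x) (1/2)" for x
  define B where "B x = ball (complex_of_real x) (rho x)" for x
  define Fx where "Fx x t = GG x (t - complex_of_real x)" for x t
  have R0pos: "None \<notin> E \<Longrightarrow> R0 > 0" using EGi by (simp add: R0_def)
  have Gf_holo: "Gf holomorphic_on {t. R0 < cmod t}" if "None \<notin> E"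
  proof -
    have "(\<lambda>t. -1/t) ` {t. R0 < cmod t} \<subseteq> ball 0 ei"
    proof
      fix w assume "w \<in> (\<lambda>t. -1/t) ` {t. R0 < cmod t}"
      then obtain t where t: "R0 < cmod t" "w = -1/t" by auto
      have "cmod w = 1 / cmod t" using t by (simp add: norm_divide)
      also have "\<dots> < 1 / R0" proof -
        have "0 < cmod t" using t R0pos[OF that] by linarith
        thus ?thesis using t R0pos[OF that] by (intro divide_strict_left_mono) auto
      qed
      finally show "w \<in> ball 0 ei" by (simp add: R0_def)
    qed
    moreover have "(\<lambda>t. -1/t) holomorphic_on {t. R0 < cmod t}"
      using R0pos[OF that] by (intro holomorphic_intros) auto
    ultimately show ?thesis unfolding Gf_def[abs_def]
      using holomorphic_on_compose_gen[unfolded o_def, of "\<lambda>t. -1/t" _ Gi "ball 0 ei"] EGi that by blast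
  qed
  have Gf_P: "Gf t = P t" if "None \<notin> E" "t \<in> Hm" "R0 < cmod t" for t
  proof -
    have "cmod (-1/t) < ei"
    proof -
      have "cmod (-1/t) = 1 / cmod t" by (simp add: norm_divide)
      also have "\<dots> < 1 / R0" proof -
        have "0 < cmod t" using that R0pos[OF that(1)] by linarith
        thus ?thesis using that R0pos[OF that(1)] by (intro divide_strict_left_mono) auto
      qed
      finally show ?thesis by (simp add: R0_def)
    qed
    moreover have "Im (-1/t) < 0" using that(2) Im_neg_inv_lt[of t] by (simp add: Hm_def)
    ultimately have "Gi (-1/t) = P (-1/(-1/t))" using EGi that(1) by simp
    thus ?thesis by (simp add: Gf_def)
  qed
  have rho: "rho x > 0" "rho x \<le> ee x" "rho x \<le> 1/2" if "x \<in> X" for x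
    using EG[of x] that by (auto simp: rho_def X_def)
  have Fx_holo: "Fx x holomorphic_on B x" if "x \<in> X" for x
  proof -
    have sub: "(\<lambda>t. t - complex_of_real x) ` B x \<subseteq> ball 0 (ee x)"
      using rho[OF that] by (auto simp: B_def dist_norm norm_minus_commute)
    have h: "(\<lambda>t. t - complex_of_real x) holomorphic_on B x" by (intro holomorphic_intros)
    have GGh: "GG x holomorphic_on ball 0 (ee x)" using EG[of x] that by (auto simp: X_def)
    show ?thesis unfolding Fx_def[abs_def]
      by (rule holomorphic_on_compose_gen[unfolded o_def, OF h GGh sub])
  qed
  have Fx_P: "Fx x t = P t" if "x \<in> X" "t \<in> B x" "t \<in> Hm" for x t
  proof -
    have "t - complex_of_real x \<in> ball 0 (ee x)" using that rho[OF that(1)]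
      by (auto simp: B_def dist_norm norm_minus_commute)
    moreover have "Im (t - complex_of_real x) < 0" using that by (simp add: Hm_def)
    ultimately show ?thesis using EG[of x] that by (auto simp: Fx_def X_def)
  qed
  have bb: "Fx x t = Fx y t" if "x \<in> X" "y \<in> X" "t \<in> B x" "t \<in> B y" for x y t
  proof (rule agree_conv[of "B x \<inter> B y" "Fx x" "Fx y" t])
    show "open (B x \<inter> B y)" "convex (B x \<inter> B y)" by (auto simp: B_def intro: convex_Int)
    show "B x \<inter> B y \<inter> Hm \<noteq> {}" using that balls_meet_Hm[of t x "rho x" y "rho y"] by (simp add: B_def)
    show "Fx x holomorphic_on B x \<inter> B y" using Fx_holo[OF that(1)] by (rule holomorphic_on_subset) auto
    show "Fx y holomorphic_on B x \<inter> B y" using Fx_holo[OF that(2)] by (rule holomorphic_on_subset) auto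
    show "Fx x s = Fx y s" if "s \<in> B x \<inter> B y \<inter> Hm" for s
      using that Fx_P[of x s] Fx_P[of y s] \<open>x \<in> X\<close> \<open>y \<in> X\<close> by auto
    show "t \<in> B x \<inter> B y" using that by auto
  qed
  have bV: "Fx x s = Gf s" if "x \<in> X" "t \<in> B x" "t \<in> V" "s \<in> B x" for x t s
  proof -
    have nE: "None \<notin> E" using that(3) by (simp add: V_def split: if_splits)
    have t: "R0 + 2 < cmod t" using that(3) nE by (simp add: V_def)
    have "cmod t \<le> cmod (complex_of_real x) + cmod (t - complex_of_real x)" by (metis norm_triangle_sub)
    moreover have "cmod (t - complex_of_real x) < 1/2" using that(2) rho[OF that(1)]
      by (simp add: B_def dist_norm norm_minus_commute)
    ultimately have x: "R0 + 3/2 < cmod (complex_of_real x)" using t by linarith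
    have sub: "B x \<subseteq> {t. R0 < cmod t}"
    proof
      fix s assume s: "s \<in> B x"
      have "cmod (complex_of_real x) \<le> cmod s + cmod (complex_of_real x - s)" by (metis norm_triangle_sub add.commute)
      moreover have "cmod (complex_of_real x - s) < 1/2" using s rho[OF that(1)] by (simp add: B_def dist_norm)
      ultimately show "s \<in> {t. R0 < cmod t}" using x by simp
    qed
    show ?thesis
    proof (rule agree_conv[of "B x" "Fx x" Gf s])
      show "open (B x)" "convex (B x)" by (auto simp: B_def)
      show "B x \<inter> Hm \<noteq> {}" using balls_meet_Hm[of t x "rho x" x "rho x"] that(2) by (simp add: B_def)
      show "Gf holomorphic_on B x" using Gf_holo[OF nE] sub by (rule holomorphic_on_subset)
      show "Fx x holomorphic_on B x" using Fx_holo that(1) .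
      show "Fx x t = Gf t" if "t \<in> B x \<inter> Hm" for t
        using that Fx_P[of x t] Gf_P[OF nE, of t] sub \<open>x \<in> X\<close> by auto
      show "s \<in> B x" by (fact that(4))
    qed
  qed
  define F where "F t = (if t \<in> Hm then P t else if \<exists>x\<in>X. t \<in> B x then Fx (SOME x. x \<in> X \<and> t \<in> B x) t else Gf t)" for t
  define U where "U = Hm \<union> (\<Union>x\<in>X. B x) \<union> V"
  have FB: "F s = Fx x s" if "x \<in> X" "s \<in> B x" for x s
  proof (cases "s \<in> Hm")
    case True thus ?thesis using Fx_P that by (simp add: F_def)
  next
    case False
    have ex: "\<exists>y. y \<in> X \<and> s \<in> B y" using that by blast
    define y where "y = (SOME y. y \<in> X \<and> s \<in> B y)"
    have y: "y \<in> X \<and> s \<in> B y" unfolding y_def using someI_ex[OF ex] .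
    have "F s = Fx y s" using False that by (auto simp: F_def y_def)
    also have "\<dots> = Fx x s" using bb y that by blast
    finally show ?thesis .
  qed
  have FV: "F s = Gf s" if "s \<in> V" for s
  proof -
    have nE: "None \<notin> E" using that by (simp add: V_def split: if_splits)
    have s: "R0 + 2 < cmod s" using that nE by (simp add: V_def)
    show ?thesis
    proof (cases "s \<in> Hm")
      case True thus ?thesis using Gf_P[OF nE True] s by (simp add: F_def)
    next
      case False
      show ?thesis
      proof (cases "\<exists>x\<in>X. s \<in> B x")
        case True
        then obtain x where "x \<in> X" "s \<in> B x" by blast
        hence "F s = Fx x s" by (rule FB)
        also have "\<dots> = Gf s" using bV \<open>x \<in> X\<close> \<open>s \<in> B x\<close> that by blast
        finally show ?thesis .
      next
        case False
        thus ?thesis using \<open>s \<notin> Hm\<close> by (simp add: F_def)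
      qed
    qed
  qed
  have openB: "open (B x)" for x by (simp add: B_def)
  have openV: "open V"
    by (auto simp: V_def intro!: open_Collect_less continuous_intros)
  have openU: "open U" unfolding U_def using open_Hm openB openV by blast
  have Fholo: "F holomorphic_on U"
  proof -
    have "F analytic_on U" unfolding analytic_on_def
    proof
      fix t assume "t \<in> U"
      then consider "t \<in> Hm" | x where "x \<in> X" "t \<in> B x" | "t \<in> V" unfolding U_def by blast
      then show "\<exists>e>0. F holomorphic_on ball t e"
      proof cases
        case 1
        then obtain e where e: "e > 0" "ball t e \<subseteq> Hm" using open_Hm openE by blast
        have "P holomorphic_on ball t e" using PH e(2) by (rule holomorphic_on_subset)
        hence "F holomorphic_on ball t e" by (rule holomorphic_transform) (use e in \<open>auto simp: F_def\<close>)
        thus ?thesis using e by blast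
      next
        case 2
        then obtain e where e: "e > 0" "ball t e \<subseteq> B x" using openB openE by blast
        have "Fx x holomorphic_on ball t e" using Fx_holo[OF 2(1)] e(2) by (rule holomorphic_on_subset)
        hence "F holomorphic_on ball t e" by (rule holomorphic_transform) (use e FB 2 in auto)
        thus ?thesis using e by blast
      next
        case 3
        have nE: "None \<notin> E" using 3 by (simp add: V_def split: if_splits)
        obtain e where e: "e > 0" "ball t e \<subseteq> V" using 3 openV openE by blast
        have "V \<subseteq> {t. R0 < cmod t}" using nE by (auto simp: V_def)
        hence "Gf holomorphic_on ball t e" using Gf_holo[OF nE] e(2) by (meson holomorphic_on_subset order_trans)
        hence "F holomorphic_on ball t e" by (rule holomorphic_transform) (use e FV in auto)
        thus ?thesis using e by blast
      qed
    qed
    thus ?thesis using openU analytic_on_open by blast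
  qed
  show ?thesis unfolding DomegaE_def
  proof (intro conjI exI[of _ U] exI[of _ F])
    show "\<phi> holomorphic_on Hm" by (fact hol)
    show "open U" by (fact openU)
    show "Hm \<subseteq> U" by (auto simp: U_def)
    show "\<forall>x. Some x \<notin> E \<longrightarrow> complex_of_real x \<in> U"
      using rho by (auto simp: U_def X_def B_def)
    show "F holomorphic_on U" by (fact Fholo)
    show "\<forall>t\<in>Hm. F t = Pf r \<phi> t" by (simp add: F_def P_def)
    show "None \<notin> E \<longrightarrow> (\<exists>\<epsilon>>0. \<exists>G. G holomorphic_on ball 0 \<epsilon> \<and>
            (\<forall>w\<in>ball 0 \<epsilon> - {0}. - 1 / w \<in> U \<and> G w = F (- 1 / w)))"
    proof
      assume nE: "None \<notin> E"
      define \<epsilon> where "\<epsilon> = min ei (1/(R0+3))"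
      have e0: "\<epsilon> > 0" using EGi[OF nE] R0pos[OF nE] by (simp add: \<epsilon>_def)
      show "\<exists>\<epsilon>>0. \<exists>G. G holomorphic_on ball 0 \<epsilon> \<and>
            (\<forall>w\<in>ball 0 \<epsilon> - {0}. - 1 / w \<in> U \<and> G w = F (- 1 / w))"
      proof (intro exI[of _ \<epsilon>] exI[of _ Gi] conjI ballI)
        show "\<epsilon> > 0" by (fact e0)
        show "Gi holomorphic_on ball 0 \<epsilon>" using EGi[OF nE]
          by (auto intro: holomorphic_on_subset simp: \<epsilon>_def)
        fix w :: complex assume w: "w \<in> ball 0 \<epsilon> - {0}"
        have "cmod w < 1/(R0+3)" "w \<noteq> 0" using w by (auto simp: \<epsilon>_def)
        hence "R0 + 3 < 1 / cmod w" using R0pos[OF nE]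
          by (metis divide_pos_pos less_divide_eq mult.commute pos_add_strict zero_less_norm_iff zero_less_numeral)
        hence "-1/w \<in> V" using nE by (simp add: V_def norm_divide)
        thus "-1/w \<in> U" by (simp add: U_def)
        show "Gi w = F (-1/w)" using FV[OF \<open>-1/w \<in> V\<close>] by (simp add: Gf_def)
      qed
    qed
  qed
qed

lemma char:
  "DomegaE r E \<phi> \<longleftrightarrow> \<phi> holomorphic_on Hm \<and> (\<forall>p. p \<notin> E \<longrightarrow> reg r \<phi> p)"
  using char1 char2 by (metis DomegaE_def)



definition mobc :: "real \<Rightarrow> real \<Rightarrow> real \<Rightarrow> real \<Rightarrow> complex \<Rightarrow> complex" where
  "mobc a b c d t = (of_real a * t + of_real b) / (of_real c * t + of_real d)"

lemma den_nz:
  assumes "a * d - b * c = 1" "t \<in> Hm"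
  shows "of_real c * t + of_real d \<noteq> 0"
proof (cases "c = 0")
  case True
  hence "d \<noteq> 0" using assms(1) by auto
  thus ?thesis using True by simp
next
  case False
  have "Im (of_real c * t + of_real d) = c * Im t" by simp
  moreover have "Im t < 0" using assms(2) by (simp add: Hm_def)
  ultimately have ne: "Im (of_real c * t + of_real d) \<noteq> 0" using False by simp
  show ?thesis
  proof
    assume "of_real c * t + of_real d = 0"
    hence "Im (of_real c * t + of_real d) = 0" by (simp only: zero_complex.sel)
    thus False using ne by simp
  qed
qed

lemma Im_mobc:
  assumes "a * d - b * c = 1"
  shows "Im (mobc a b c d t) = Im t / (cmod (of_real c * t + of_real d))^2"
proof -
  have "Im (mobc a b c d t) = (a * Im t * (c * Re t + d) - (a * Re t + b) * (c * Im t)) / (cmod (of_real c * t + of_real d))^2"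
    by (simp add: mobc_def Im_divide')
  also have "a * Im t * (c * Re t + d) - (a * Re t + b) * (c * Im t) = Im t * (a * d - b * c)"
    by (simp add: algebra_simps)
  finally show ?thesis using assms by simp
qed

lemma mobc_Hm:
  assumes "a * d - b * c = 1" "t \<in> Hm"
  shows "mobc a b c d t \<in> Hm"
proof -
  have "(cmod (of_real c * t + of_real d))^2 > 0" using den_nz[OF assms] by simp
  moreover have "Im t < 0" using assms(2) by (simp add: Hm_def)
  ultimately show ?thesis using Im_mobc[OF assms(1), of t] by (simp add: Hm_def divide_neg_pos)
qed

lemma mobw:
  fixes A B C D :: complex
  assumes "D \<noteq> 0"
  shows "\<exists>\<delta>>0. (\<lambda>w. (A*w+B)/(C*w+D)) holomorphic_on ball 0 \<delta> \<and> (\<forall>w\<in>ball 0 \<delta>. C*w+D \<noteq> 0)"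
proof -
  define \<delta> where "\<delta> = cmod D / (cmod C + 1)"
  have d0: "\<delta> > 0" using assms unfolding \<delta>_def by (intro divide_pos_pos) (auto intro: add_nonneg_pos)
  have nz: "C*w+D \<noteq> 0" if "w \<in> ball 0 \<delta>" for w
  proof
    assume h: "C*w+D = 0"
    have "cmod D = cmod (C*w)" using h by (metis add_eq_0_iff norm_minus_cancel)
    also have "\<dots> = cmod C * cmod w" by (simp add: norm_mult)
    also have "\<dots> \<le> cmod C * \<delta>" using that by (intro mult_left_mono) auto
    also have "\<dots> < cmod D"
    proof -
      have pos: "cmod C + 1 > 0" by (simp add: add_nonneg_pos)
      have "cmod C * \<delta> = (cmod C * cmod D)/(cmod C + 1)" by (simp add: \<delta>_def)
      also have "\<dots> < ((cmod C + 1) * cmod D)/(cmod C+1)"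
        by (rule divide_strict_right_mono) (use assms pos in simp_all)
      also have "\<dots> = cmod D" using pos by simp
      finally show ?thesis .
    qed
    finally show False by simp
  qed
  have "(\<lambda>w. (A*w+B)/(C*w+D)) holomorphic_on ball 0 \<delta>"
    using nz by (intro holomorphic_intros) auto
  thus ?thesis using d0 nz by blast
qed

lemma chart_Hm: "Im w < 0 \<Longrightarrow> chart p w \<in> Hm"
  using Im_chart[of p w] by (simp add: Hm_def)

lemma chart_trans:
  assumes det: "a*d - b*c = 1"
  shows "\<exists>\<delta>>0. \<exists>m. m holomorphic_on ball 0 \<delta> \<and> m 0 = 0 \<and>
     (\<forall>w\<in>ball 0 \<delta>. Im w < 0 \<longrightarrow> chart (mob a b c d p) (m w) = mobc a b c d (chart p w))"
proof (cases p)
  case None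
  show ?thesis
  proof (cases "c = 0")
    case True
    have ad: "a * d = 1" using det True by simp
    hence a0: "a \<noteq> 0" and d0: "d \<noteq> 0" by auto
    obtain \<delta> where \<delta>: "\<delta> > 0" "(\<lambda>w. (of_real (-d)*w+0)/(of_real b*w+ of_real (-a))) holomorphic_on ball 0 \<delta>"
      "\<forall>w\<in>ball 0 \<delta>. of_real b*w+ of_real (-a) \<noteq> (0::complex)"
      using mobw[of "of_real (-a)" "of_real (-d)" 0 "of_real b"] a0 by auto
    show ?thesis
    proof (intro exI conjI ballI impI)
      show "\<delta> > 0" by (fact \<delta>)
      show "(\<lambda>w. (of_real (-d)*w+0)/(of_real b*w+ of_real (-a))) holomorphic_on ball 0 \<delta>" by (fact \<delta>)
      show "(of_real (-d)*0+0)/(of_real b*0+ of_real (-a)) = (0::complex)" by simp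
      fix w :: complex assume w: "w \<in> ball 0 \<delta>" "Im w < 0"
      have w0: "w \<noteq> 0" using w by auto
      have n1: "of_real b*w - of_real a \<noteq> 0" using \<delta>(3) w by simp
      show "chart (mob a b c d p) ((of_real (-d)*w+0)/(of_real b*w+ of_real (-a))) = mobc a b c d (chart p w)"
        using None True w0 n1 d0 a0 by (simp add: chart_def mob_def mobc_def field_simps)
    qed
  next
    case False
    obtain \<delta> where \<delta>: "\<delta> > 0" "(\<lambda>w. (of_real (-1)*w+0)/(of_real (c*d)*w+ of_real (-(c*c)))) holomorphic_on ball 0 \<delta>"
      "\<forall>w\<in>ball 0 \<delta>. of_real (c*d)*w+ of_real (-(c*c)) \<noteq> (0::complex)"
      using mobw[of "of_real (-(c*c))" "of_real (-1)" 0 "of_real (c*d)"] False by auto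
    show ?thesis
    proof (intro exI conjI ballI impI)
      show "\<delta> > 0" by (fact \<delta>)
      show "(\<lambda>w. (of_real (-1)*w+0)/(of_real (c*d)*w+ of_real (-(c*c)))) holomorphic_on ball 0 \<delta>" by (fact \<delta>)
      show "(of_real (-1)*0+0)/(of_real (c*d)*0+ of_real (-(c*c))) = (0::complex)" by simp
      fix w :: complex assume w: "w \<in> ball 0 \<delta>" "Im w < 0"
      have w0: "w \<noteq> 0" using w by auto
      have "of_real c * (-1/w) + of_real d \<noteq> 0" using den_nz[OF det chart_Hm[OF w(2), of None]] by (simp add: chart_def)
      hence n1: "of_real d * w - of_real c \<noteq> 0" using w0 by (simp add: field_simps)
      have detc: "of_real a * of_real d - of_real b * of_real c = (1::complex)"
        by (metis det of_real_1 of_real_diff of_real_mult)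
      show "chart (mob a b c d p) ((of_real (-1)*w+0)/(of_real (c*d)*w+ of_real (-(c*c)))) = mobc a b c d (chart p w)"
      proof -
        have e1: "of_real (c*d)*w+ of_real (-(c*c)) = of_real c * (of_real d * w - of_real c)"
          by (simp add: power2_eq_square algebra_simps)
        have m_eq: "(of_real (-1)*w+0)/(of_real (c*d)*w+ of_real (-(c*c))) = - w / (of_real c * (of_real d * w - of_real c))"
          unfolding e1 by simp
        have "chart (mob a b c d p) ((of_real (-1)*w+0)/(of_real (c*d)*w+ of_real (-(c*c))))
            = of_real a / of_real c - w / (of_real c * (of_real d * w - of_real c))"
          unfolding m_eq using None False by (simp add: chart_def mob_def)
        also have "\<dots> = (of_real a * (of_real d * w - of_real c) - w) / (of_real c * (of_real d * w - of_real c))"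
          using False n1 by (simp add: field_simps)
        also have "of_real a * (of_real d * w - of_real c) - w = of_real c * (of_real b * w - of_real a)"
          using detc by (simp add: algebra_simps)
        also have "of_real c * (of_real b * w - of_real a) / (of_real c * (of_real d * w - of_real c))
             = (of_real b * w - of_real a) / (of_real d * w - of_real c)" using False by simp
        also have "\<dots> = mobc a b c d (chart p w)"
          using None w0 n1 by (simp add: chart_def mobc_def field_simps)
        finally show ?thesis .
      qed
    qed
  qed
next
  case (Some x)
  show ?thesis
  proof (cases "c*x+d = 0")
    case True
    have c0: "c \<noteq> 0" using True det by auto
    have ab: "a*x+b \<noteq> 0"
    proof
      assume "a*x+b = 0"
      hence "d*(a*x+b) - b*(c*x+d) = 0" using True by simp
      hence "x * (a*d - b*c) = 0" by (simp add: algebra_simps)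
      hence "x = 0" using det by simp
      thus False using True \<open>a*x+b = 0\<close> det by simp
    qed
    obtain \<delta> where \<delta>: "\<delta> > 0" "(\<lambda>w. (of_real (-c)*w+0)/(of_real a*w+ of_real (a*x+b))) holomorphic_on ball 0 \<delta>"
      "\<forall>w\<in>ball 0 \<delta>. of_real a*w+ of_real (a*x+b) \<noteq> (0::complex)"
      using mobw[of "of_real (a*x+b)" "of_real (-c)" 0 "of_real a"] ab by (simp only: of_real_eq_0_iff) blast
    show ?thesis
    proof (intro exI conjI ballI impI)
      show "\<delta> > 0" by (fact \<delta>)
      show "(\<lambda>w. (of_real (-c)*w+0)/(of_real a*w+ of_real (a*x+b))) holomorphic_on ball 0 \<delta>" by (fact \<delta>)
      show "(of_real (-c)*0+0)/(of_real a*0+ of_real (a*x+b)) = (0::complex)" by simp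
      fix w :: complex assume w: "w \<in> ball 0 \<delta>" "Im w < 0"
      have w0: "w \<noteq> 0" using w by auto
      have n1: "of_real a*w+ of_real (a*x+b) \<noteq> (0::complex)" using \<delta>(3) w by simp
      have dd: "of_real d = - (of_real c * of_real x :: complex)" using True
        by (metis add.commute add_eq_0_iff of_real_add of_real_mult of_real_eq_0_iff minus_equation_iff)
      have "chart (mob a b c d p) ((of_real (-c)*w+0)/(of_real a*w+ of_real (a*x+b)))
          = (of_real a*w+ of_real (a*x+b)) / (of_real c * w)"
        using Some True n1 w0 c0 by (simp add: chart_def mob_def field_simps)
      also have "\<dots> = mobc a b c d (chart p w)"
        using Some by (simp add: chart_def mobc_def dd algebra_simps)
      finally show "chart (mob a b c d p) ((of_real (-c)*w+0)/(of_real a*w+ of_real (a*x+b))) = mobc a b c d (chart p w)" .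
    qed
  next
    case False
    define y where "y = (a*x+b)/(c*x+d)"
    have yy: "y * (c*x+d) = a*x+b" using False by (simp add: y_def)
    obtain \<delta> where \<delta>: "\<delta> > 0" "(\<lambda>w. (of_real (a - c*y)*w+0)/(of_real c*w+ of_real (c*x+d))) holomorphic_on ball 0 \<delta>"
      "\<forall>w\<in>ball 0 \<delta>. of_real c*w+ of_real (c*x+d) \<noteq> (0::complex)"
      using mobw[of "of_real (c*x+d)" "of_real (a - c*y)" 0 "of_real c"] False by (simp only: of_real_eq_0_iff) blast
    show ?thesis
    proof (intro exI conjI ballI impI)
      show "\<delta> > 0" by (fact \<delta>)
      show "(\<lambda>w. (of_real (a - c*y)*w+0)/(of_real c*w+ of_real (c*x+d))) holomorphic_on ball 0 \<delta>" by (fact \<delta>)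
      show "(of_real (a - c*y)*0+0)/(of_real c*0+ of_real (c*x+d)) = (0::complex)" by simp
      fix w :: complex assume w: "w \<in> ball 0 \<delta>" "Im w < 0"
      have n1: "of_real c*w+ of_real (c*x+d) \<noteq> (0::complex)" using \<delta>(3) w by simp
      have yyc: "of_real y * (of_real c * of_real x + of_real d) = (of_real a * of_real x + of_real b :: complex)"
        by (metis yy of_real_add of_real_mult)
      have n2: "of_real c * (of_real x + w) + of_real d \<noteq> (0::complex)" using n1 by (simp add: algebra_simps)
      have "chart (mob a b c d p) ((of_real (a - c*y)*w+0)/(of_real c*w+ of_real (c*x+d)))
          = of_real y + (of_real a - of_real c * of_real y)*w/(of_real c * (of_real x + w) + of_real d)"
        using Some False by (simp add: chart_def mob_def y_def algebra_simps)
      also have "\<dots> = (of_real y * (of_real c * of_real x + of_real d) + of_real a * w) / (of_real c * (of_real x + w) + of_real d)"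
        using n2 by (simp add: field_simps)
      also have "of_real y * (of_real c * of_real x + of_real d) + of_real a * w = of_real a * (of_real x + w) + (of_real b :: complex)"
        unfolding yyc by (simp add: algebra_simps)
      also have "(of_real a * (of_real x + w) + of_real b) / (of_real c * (of_real x + w) + of_real d) = mobc a b c d (chart p w)"
        using Some by (simp add: chart_def mobc_def)
      finally show "chart (mob a b c d p) ((of_real (a - c*y)*w+0)/(of_real c*w+ of_real (c*x+d))) = mobc a b c d (chart p w)" .
    qed
  qed
qed

definition L2 :: "complex \<Rightarrow> complex" where
  "L2 z = complex_of_real (ln (cmod z)) + \<i> * complex_of_real (arg_lo z)"

lemma pow_lo_eq: "z \<noteq> 0 \<Longrightarrow> pow_lo z s = exp (s * L2 z)"
  by (simp add: pow_lo_def L2_def)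

lemma L2_Ln: "Arg z \<noteq> pi \<Longrightarrow> z \<noteq> 0 \<Longrightarrow> L2 z = Ln z"
  by (simp add: L2_def arg_lo_def Ln_Arg)

lemma L2_Ln_Im: "Im z \<noteq> 0 \<Longrightarrow> L2 z = Ln z"
  by (rule L2_Ln) (auto simp: Arg_eq_pi)

lemma exp_L2: assumes "z \<noteq> 0" shows "exp (L2 z) = z"
proof (cases "Arg z = pi")
  case False thus ?thesis using assms by (simp add: L2_Ln)
next
  case True
  have "L2 z = Ln z - 2 * of_real pi * \<i>"
    using True assms by (simp add: L2_def arg_lo_def Ln_Arg algebra_simps)
  hence "exp (L2 z) = exp (Ln z) / exp (2 * of_real pi * \<i>)" by (simp add: exp_diff)
  thus ?thesis using assms by simp
qed

definition Phi :: "real \<Rightarrow> real \<Rightarrow> real \<Rightarrow> real \<Rightarrow> complex \<Rightarrow> complex" where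
  "Phi a b c d t = Ln (\<i> - t) - L2 (of_real c * t + of_real d) - Ln (\<i> - mobc a b c d t)"

lemma i_minus_Hm: "t \<in> Hm \<Longrightarrow> Im (\<i> - t) > 0"
  by (simp add: Hm_def)

lemma i_minus_nz: "t \<in> Hm \<Longrightarrow> \<i> - t \<noteq> 0"
  using i_minus_Hm by fastforce

lemma slash_factor:
  assumes det: "a * d - b * c = 1" and t: "t \<in> Hm"
  shows "Pf r (slash r a b c d \<phi>) t = exp ((2 - r) * Phi a b c d t) * Pf r \<phi> (mobc a b c d t)"
proof -
  define g where "g = mobc a b c d t"
  define z where "z = of_real c * t + of_real d"
  have gH: "g \<in> Hm" unfolding g_def by (rule mobc_Hm[OF det t])
  have z0: "z \<noteq> 0" unfolding z_def by (rule den_nz[OF det t])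
  have n1: "\<i> - t \<noteq> 0" using t by (rule i_minus_nz)
  have n3: "\<i> - g \<noteq> 0" using gH by (rule i_minus_nz)
  have "Pf r (slash r a b c d \<phi>) t = exp ((2-r) * Ln (\<i> - t)) * exp ((r - 2) * L2 z) * \<phi> g"
    using n1 z0 by (simp add: Pf_def slash_def powr_def pow_lo_eq g_def mobc_def z_def)
  also have "exp ((2-r) * Ln (\<i> - t)) * exp ((r - 2) * L2 z)
      = exp ((2 - r) * (Ln (\<i> - t) - L2 z - Ln (\<i> - g))) * exp ((2-r) * Ln (\<i> - g))"
    by (simp add: exp_add[symmetric] algebra_simps)
  finally show ?thesis using n3 by (simp add: Pf_def powr_def Phi_def g_def z_def)
qed

lemma exp_Phi:
  assumes det: "a * d - b * c = 1" and t: "t \<in> Hm"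
  shows "exp (Phi a b c d t) = (\<i> - t) / ((of_real c * \<i> - of_real a) * t + (of_real d * \<i> - of_real b))"
proof -
  define g where "g = mobc a b c d t"
  define z where "z = of_real c * t + of_real d"
  have gH: "g \<in> Hm" unfolding g_def by (rule mobc_Hm[OF det t])
  have z0: "z \<noteq> 0" unfolding z_def by (rule den_nz[OF det t])
  have n1: "\<i> - t \<noteq> 0" using t by (rule i_minus_nz)
  have n3: "\<i> - g \<noteq> 0" using gH by (rule i_minus_nz)
  have e1: "exp (Phi a b c d t) = (\<i> - t) / z / (\<i> - g)"
    using n1 n3 z0 by (simp add: Phi_def exp_diff exp_L2 g_def z_def)
  have zg: "z * g = of_real a * t + of_real b" using z0 by (simp add: g_def mobc_def z_def[symmetric])
  have "z * (\<i> - g) = (of_real c * \<i> - of_real a) * t + (of_real d * \<i> - of_real b)"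
    by (simp add: right_diff_distrib zg) (simp add: z_def algebra_simps)
  hence "(\<i> - t) / z / (\<i> - g) = (\<i> - t) / ((of_real c * \<i> - of_real a) * t + (of_real d * \<i> - of_real b))"
    by (metis divide_divide_eq_left)
  thus ?thesis using e1 by simp
qed

lemma Phi_cont:
  assumes det: "a * d - b * c = 1"
  shows "continuous_on Hm (Phi a b c d)"
proof -
  have c1: "continuous_on Hm (\<lambda>t. Ln (\<i> - t))"
    by (intro continuous_intros) (auto intro!: not_nonpos_Im dest: i_minus_Hm)
  have cm: "continuous_on Hm (mobc a b c d)"
    unfolding mobc_def[abs_def] using den_nz[OF det] by (intro continuous_intros) auto
  have c3: "continuous_on Hm (\<lambda>t. Ln (\<i> - mobc a b c d t))"
  proof (intro continuous_on_Ln' continuous_intros cm)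
    fix z assume "z \<in> Hm"
    hence "Im (mobc a b c d z) < 0" using mobc_Hm[OF det] by (simp add: Hm_def)
    thus "\<i> - mobc a b c d z \<notin> \<real>\<^sub>\<le>\<^sub>0" by (intro not_nonpos_Im) simp
  qed
  have c2: "continuous_on Hm (\<lambda>t. L2 (of_real c * t + of_real d))"
  proof (cases "c = 0")
    case True thus ?thesis by (simp add: continuous_on_const)
  next
    case False
    have im: "Im (of_real c * t + of_real d) \<noteq> 0" if "t \<in> Hm" for t
      using that False by (simp add: Hm_def)
    have "continuous_on Hm (\<lambda>t. Ln (of_real c * t + of_real d))"
      by (intro continuous_on_Ln' continuous_intros) (use im not_nonpos_Im in blast)
    thus ?thesis by (rule continuous_on_cong[THEN iffD1, rotated 2]) (use im L2_Ln_Im in auto)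
  qed
  show ?thesis unfolding Phi_def[abs_def] by (intro continuous_on_diff c1 c2 c3)
qed

lemma Qe_exists:
  assumes det: "a * d - b * c = 1"
  shows "\<exists>A B C D. D \<noteq> 0 \<and> B \<noteq> 0 \<and>
     (\<forall>w. Im w < 0 \<longrightarrow> exp (Phi a b c d (chart p w)) = (A*w+B)/(C*w+D))"
proof -
  define \<alpha> where "\<alpha> = of_real c * \<i> - of_real a"
  define \<beta> where "\<beta> = of_real d * \<i> - of_real b"
  have eP: "exp (Phi a b c d t) = (\<i> - t) / (\<alpha> * t + \<beta>)" if "t \<in> Hm" for t
    using exp_Phi[OF det that] by (simp add: \<alpha>_def \<beta>_def)
  show ?thesis
  proof (cases p)
    case None
    have a0: "\<alpha> \<noteq> 0"
    proof
      assume "\<alpha> = 0"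
      hence "a = 0" "c = 0" by (simp_all add: \<alpha>_def complex_eq_iff)
      thus False using det by simp
    qed
    show ?thesis
    proof (intro exI conjI allI impI)
      show "- \<alpha> \<noteq> 0" using a0 by simp
      show "(1::complex) \<noteq> 0" by simp
      fix w :: complex assume w: "Im w < 0"
      have w0: "w \<noteq> 0" using w by auto
      have "exp (Phi a b c d (chart p w)) = (\<i> + 1/w) / (\<alpha> * (-1/w) + \<beta>)"
        using eP[OF chart_Hm[OF w, of p]] None by (simp add: chart_def)
      also have "\<dots> = ((\<i> * w + 1)/w) / ((\<beta> * w + - \<alpha>)/w)"
        using w0 by (simp add: field_simps)
      also have "\<dots> = (\<i> * w + 1) / (\<beta> * w + - \<alpha>)"
        using w0 by (cases "\<beta> * w + - \<alpha> = 0") (simp_all add: field_simps)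
      finally show "exp (Phi a b c d (chart p w)) = (\<i> * w + 1) / (\<beta> * w + - \<alpha>)" .
    qed
  next
    case (Some x)
    have D0: "\<alpha> * of_real x + \<beta> \<noteq> 0"
    proof
      assume "\<alpha> * of_real x + \<beta> = 0"
      hence h1: "c*x+d = 0" and h2: "a*x+b = 0" by (simp_all add: \<alpha>_def \<beta>_def complex_eq_iff algebra_simps)
      hence "d*(a*x+b) - b*(c*x+d) = 0" by simp
      hence "x * (a*d - b*c) = 0" by (simp add: algebra_simps)
      hence "x = 0" using det by simp
      thus False using h1 h2 det by simp
    qed
    show ?thesis
    proof (intro exI conjI allI impI)
      show "\<alpha> * of_real x + \<beta> \<noteq> 0" by (fact D0)
      show "\<i> - of_real x \<noteq> 0" by (simp add: complex_eq_iff)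
      fix w :: complex assume w: "Im w < 0"
      show "exp (Phi a b c d (chart p w)) = ((-1) * w + (\<i> - of_real x)) / (\<alpha> * w + (\<alpha> * of_real x + \<beta>))"
        using eP[OF chart_Hm[OF w, of p]] Some by (simp add: chart_def algebra_simps)
    qed
  qed
qed

lemma factor:
  assumes det: "a * d - b * c = 1"
  shows "\<exists>\<delta>>0. \<exists>K. K holomorphic_on ball 0 \<delta> \<and>
     (\<forall>w\<in>ball 0 \<delta>. Im w < 0 \<longrightarrow> exp ((2 - r) * Phi a b c d (chart p w)) = K w)"
proof -
  obtain A B C D where ABCD: "D \<noteq> 0" "B \<noteq> 0"
    "\<And>w. Im w < 0 \<Longrightarrow> exp (Phi a b c d (chart p w)) = (A*w+B)/(C*w+D)"
    using Qe_exists[OF det, of p] by blast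
  define Q where "Q w = (A*w+B)/(C*w+D)" for w
  obtain \<delta>1 where d1: "\<delta>1 > 0" "Q holomorphic_on ball 0 \<delta>1"
    using mobw[OF ABCD(1), of A B C] unfolding Q_def[abs_def] by blast
  define q0 where "q0 = B / D"
  have q0: "q0 \<noteq> 0" "Q 0 = q0" using ABCD by (simp_all add: q0_def Q_def)
  define f where "f w = Q w / q0" for w
  have fh: "f holomorphic_on ball 0 \<delta>1" unfolding f_def[abs_def] using d1(2) q0 by (intro holomorphic_intros) auto
  have "open (ball 0 \<delta>1 \<inter> f -` {z. 0 < Re z})"
    by (rule continuous_open_preimage[OF holomorphic_on_imp_continuous_on[OF fh]]) (auto intro: open_halfspace_Re_gt)
  moreover have "0 \<in> ball 0 \<delta>1 \<inter> f -` {z. 0 < Re z}" using d1 q0 by (simp add: f_def)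
  ultimately obtain \<delta> where \<delta>: "\<delta> > 0" "ball 0 \<delta> \<subseteq> ball 0 \<delta>1 \<inter> f -` {z. 0 < Re z}"
    using openE by blast
  have fRe: "0 < Re (f w)" if "w \<in> ball 0 \<delta>" for w using \<delta>(2) that by auto
  have fh2: "f holomorphic_on ball 0 \<delta>" using holomorphic_on_subset[OF fh] \<delta>(2) by blast
  define \<Lambda> where "\<Lambda> w = Ln (f w)" for w
  have \<Lambda>h: "\<Lambda> holomorphic_on ball 0 \<delta>" unfolding \<Lambda>_def[abs_def]
  proof (intro holomorphic_intros fh2)
    fix z :: complex assume "z \<in> ball 0 \<delta>"
    hence "0 < Re (f z)" by (rule fRe)
    thus "f z \<notin> \<real>\<^sub>\<le>\<^sub>0" by (simp add: complex_nonpos_Reals_iff)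
  qed
  have exp\<Lambda>: "exp (\<Lambda> w) = f w" if "w \<in> ball 0 \<delta>" for w
  proof -
    have "f w \<noteq> 0" using fRe[OF that] by (metis zero_complex.sel(1) less_irrefl)
    thus ?thesis by (simp add: \<Lambda>_def)
  qed
  define D' where "D' = ball 0 \<delta> \<inter> {w. Im w < 0}"
  define h where "h w = Phi a b c d (chart p w) - \<Lambda> w" for w
  have exph: "exp (h w) = q0" if "w \<in> D'" for w
  proof -
    have w: "w \<in> ball 0 \<delta>" "Im w < 0" using that by (auto simp: D'_def)
    have "exp (Phi a b c d (chart p w)) = Q w" using ABCD(3)[OF w(2)] by (simp add: Q_def)
    moreover have "Q w \<noteq> 0"
    proof -
      have "exp (Phi a b c d (chart p w)) \<noteq> 0" by simp
      thus ?thesis using ABCD(3)[OF w(2)] by (simp add: Q_def)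
    qed
    ultimately show ?thesis using exp\<Lambda>[OF w(1)] q0 by (simp add: h_def exp_diff f_def)
  qed
  have chc: "continuous_on D' (chart p)"
  proof (cases p)
    case None
    have "continuous_on D' (\<lambda>w. -1/w)" by (intro continuous_intros) (auto simp: D'_def)
    thus ?thesis using None by (simp add: chart_def[abs_def])
  next
    case (Some x)
    have "continuous_on D' (\<lambda>w. of_real x + w)" by (intro continuous_intros)
    thus ?thesis using Some by (simp add: chart_def[abs_def])
  qed
  have hc: "continuous_on D' h"
  proof -
    have "continuous_on D' (\<lambda>w. Phi a b c d (chart p w))"
      by (rule continuous_on_compose2[OF Phi_cont[OF det] chc]) (auto simp: D'_def intro: chart_Hm)
    moreover have "continuous_on D' \<Lambda>"
      using holomorphic_on_imp_continuous_on[OF \<Lambda>h] by (rule continuous_on_subset) (auto simp: D'_def)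
    ultimately show ?thesis unfolding h_def[abs_def] by (intro continuous_intros)
  qed
  have conn: "connected D'" unfolding D'_def
    by (intro convex_connected convex_Int convex_ball convex_halfspace_Im_lt)
  have "h constant_on D'"
  proof (rule continuous_discrete_range_constant[OF conn hc])
    fix x assume x: "x \<in> D'"
    show "\<exists>e>0. \<forall>y. y \<in> D' \<and> h y \<noteq> h x \<longrightarrow> e \<le> cmod (h y - h x)"
    proof (intro exI[of _ "2*pi"] conjI allI impI)
      show "(0::real) < 2 * pi" by simp
      fix y assume y: "y \<in> D' \<and> h y \<noteq> h x"
      have "exp (h y) = exp (h x)" using exph x y by simp
      then obtain n :: int where n: "h y = h x + of_int (2 * n) * pi * \<i>" using exp_eq by blast
      have "n \<noteq> 0" using n y by auto
      hence "1 \<le> \<bar>real_of_int n\<bar>" by linarith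
      have "cmod (h y - h x) = cmod (of_int (2 * n) * pi * \<i>)" using n by simp
      also have "\<dots> = 2 * pi * \<bar>real_of_int n\<bar>" by (simp add: norm_mult)
      finally show "2 * pi \<le> cmod (h y - h x)" using \<open>1 \<le> \<bar>real_of_int n\<bar>\<close> by simp
    qed
  qed
  then obtain k where k: "\<And>w. w \<in> D' \<Longrightarrow> h w = k" unfolding constant_on_def by blast
  show ?thesis
  proof (intro exI conjI ballI impI)
    show "\<delta> > 0" by (fact \<delta>)
    show "(\<lambda>w. exp ((2 - r) * (\<Lambda> w + k))) holomorphic_on ball 0 \<delta>"
      using \<Lambda>h by (intro holomorphic_intros)
    fix w assume "w \<in> ball 0 \<delta>" "Im w < 0"
    hence "w \<in> D'" by (simp add: D'_def)
    hence "Phi a b c d (chart p w) = \<Lambda> w + k" using k[of w] by (simp add: h_def algebra_simps)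
    thus "exp ((2 - r) * Phi a b c d (chart p w)) = exp ((2 - r) * (\<Lambda> w + k))" by simp
  qed
qed

lemma transport:
  assumes det: "a * d - b * c = 1" and R: "reg r \<phi> (mob a b c d p)"
  shows "reg r (slash r a b c d \<phi>) p"
proof -
  obtain e G where eG: "e > 0" "G holomorphic_on ball 0 e"
    "\<forall>w\<in>ball 0 e. Im w < 0 \<longrightarrow> G w = Pf r \<phi> (chart (mob a b c d p) w)"
    using R unfolding reg_def by blast
  obtain \<delta>1 m where m: "\<delta>1 > 0" "m holomorphic_on ball 0 \<delta>1" "m 0 = 0"
    "\<forall>w\<in>ball 0 \<delta>1. Im w < 0 \<longrightarrow> chart (mob a b c d p) (m w) = mobc a b c d (chart p w)"
    using chart_trans[OF det, of p] by blast
  obtain \<delta>2 K where K: "\<delta>2 > 0" "K holomorphic_on ball 0 \<delta>2"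
    "\<forall>w\<in>ball 0 \<delta>2. Im w < 0 \<longrightarrow> exp ((2 - r) * Phi a b c d (chart p w)) = K w"
    using factor[OF det, of r p] by blast
  define \<delta>0 where "\<delta>0 = min \<delta>1 \<delta>2"
  have mc: "continuous_on (ball 0 \<delta>0) m"
    using holomorphic_on_imp_continuous_on[OF m(2)] by (rule continuous_on_subset) (auto simp: \<delta>0_def)
  have "open (ball 0 \<delta>0 \<inter> m -` ball 0 e)"
    by (rule continuous_open_preimage[OF mc]) auto
  moreover have "0 \<in> ball 0 \<delta>0 \<inter> m -` ball 0 e" using m(1) K(1) eG(1) m(3) by (simp add: \<delta>0_def)
  ultimately obtain \<delta> where \<delta>: "\<delta> > 0" "ball 0 \<delta> \<subseteq> ball 0 \<delta>0 \<inter> m -` ball 0 e"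
    using openE by blast
  have s0: "ball (0::complex) \<delta> \<subseteq> ball 0 \<delta>0" using \<delta>(2) by blast
  have "ball (0::complex) \<delta>0 \<subseteq> ball 0 \<delta>1" by (rule subset_ball) (simp add: \<delta>0_def)
  hence sub1: "ball (0::complex) \<delta> \<subseteq> ball 0 \<delta>1" using s0 by blast
  have "ball (0::complex) \<delta>0 \<subseteq> ball 0 \<delta>2" by (rule subset_ball) (simp add: \<delta>0_def)
  hence sub2: "ball (0::complex) \<delta> \<subseteq> ball 0 \<delta>2" using s0 by blast
  have msub: "m ` ball 0 \<delta> \<subseteq> ball 0 e" using \<delta>(2) by auto
  show ?thesis unfolding reg_def
  proof (intro exI conjI ballI impI)
    show "\<delta> > 0" by (fact \<delta>(1))
    have Gm: "(\<lambda>w. G (m w)) holomorphic_on ball 0 \<delta>"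
      by (rule holomorphic_on_compose_gen[unfolded o_def, OF holomorphic_on_subset[OF m(2) sub1] eG(2) msub])
    show "(\<lambda>w. K w * G (m w)) holomorphic_on ball 0 \<delta>"
      using holomorphic_on_subset[OF K(2) sub2] Gm by (intro holomorphic_intros)
    fix w assume w: "w \<in> ball 0 \<delta>" "Im w < 0"
    have t: "chart p w \<in> Hm" by (rule chart_Hm[OF w(2)])
    have w1: "w \<in> ball 0 \<delta>1" and w2: "w \<in> ball 0 \<delta>2" using w(1) sub1 sub2 by auto
    have ch: "chart (mob a b c d p) (m w) = mobc a b c d (chart p w)" using m(4) w1 w(2) by blast
    have "Im (chart (mob a b c d p) (m w)) < 0" using ch mobc_Hm[OF det t] by (simp add: Hm_def)
    hence imw: "Im (m w) < 0" by (simp add: Im_chart)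
    have me: "m w \<in> ball 0 e" using msub w(1) by (meson image_subset_iff)
    have "Pf r (slash r a b c d \<phi>) (chart p w) = exp ((2 - r) * Phi a b c d (chart p w)) * Pf r \<phi> (mobc a b c d (chart p w))"
      by (rule slash_factor[OF det t])
    also have "\<dots> = K w * G (m w)"
      using K(3) w2 w(2) eG(3) me imw ch by simp
    finally show "K w * G (m w) = Pf r (slash r a b c d \<phi>) (chart p w)" by simp
  qed
qed


lemma Pf_lin: "Pf r (\<lambda>t. \<alpha> * \<phi> t + \<beta> * \<psi> t) t = \<alpha> * Pf r \<phi> t + \<beta> * Pf r \<psi> t"
  by (simp add: Pf_def algebra_simps)

lemma reg_lin:
  assumes "reg r \<phi> p" "reg r \<psi> p"
  shows "reg r (\<lambda>t. \<alpha> * \<phi> t + \<beta> * \<psi> t) p"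
proof -
  obtain e1 G1 where 1: "e1 > 0" "G1 holomorphic_on ball 0 e1" "\<forall>w\<in>ball 0 e1. Im w < 0 \<longrightarrow> G1 w = Pf r \<phi> (chart p w)"
    using assms(1) unfolding reg_def by blast
  obtain e2 G2 where 2: "e2 > 0" "G2 holomorphic_on ball 0 e2" "\<forall>w\<in>ball 0 e2. Im w < 0 \<longrightarrow> G2 w = Pf r \<psi> (chart p w)"
    using assms(2) unfolding reg_def by blast
  show ?thesis unfolding reg_def
  proof (intro exI conjI)
    show "min e1 e2 > 0" using 1 2 by simp
    show "(\<lambda>w. \<alpha> * G1 w + \<beta> * G2 w) holomorphic_on ball 0 (min e1 e2)"
    proof -
      have "G1 holomorphic_on ball 0 (min e1 e2)" by (rule holomorphic_on_subset[OF 1(2)]) auto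
      moreover have "G2 holomorphic_on ball 0 (min e1 e2)" by (rule holomorphic_on_subset[OF 2(2)]) auto
      ultimately show ?thesis by (intro holomorphic_intros)
    qed
    show "\<forall>w\<in>ball 0 (min e1 e2). Im w < 0 \<longrightarrow> \<alpha> * G1 w + \<beta> * G2 w = Pf r (\<lambda>t. \<alpha> * \<phi> t + \<beta> * \<psi> t) (chart p w)"
      using 1 2 by (simp add: Pf_lin)
  qed
qed

theorem lemma3p1:
  fixes r \<mu> :: complex and a b c d :: real and \<aa> :: "real option" and h :: "complex \<Rightarrow> complex"
  assumes "a * d - b * c = 1"
    and "parabolic a b c d"
    and "fixed_P1R a b c d \<aa>"
    and "\<forall>p. fixed_P1R a b c d p \<longrightarrow> p = \<aa>"
    and "\<mu> \<noteq> 0"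
    and "Dfs r h"
    and "Domega r (\<lambda>t. inverse \<mu> * slash r a b c d h t - h t)"
  shows "bsing r h \<subseteq> {\<aa>}"
proof -
  define S where "S = {p. \<not> reg r h p}"
  obtain E where E: "finite E" "DomegaE r E h" using assms(6) unfolding Dfs_def by blast
  have hr: "h holomorphic_on Hm \<and> (\<forall>p. p \<notin> E \<longrightarrow> reg r h p)" using char[THEN iffD1, OF E(2)] .
  have hol: "h holomorphic_on Hm" using hr by (rule conjunct1)
  have regE: "\<And>p. p \<notin> E \<Longrightarrow> reg r h p" using hr by blast
  have "S \<subseteq> E" using regE by (auto simp: S_def)
  hence finS: "finite S" using E(1) finite_subset by blast
  have PS: "finite S \<and> DomegaE r S h \<and> (\<forall>E'. finite E' \<and> DomegaE r E' h \<longrightarrow> S \<subseteq> E')"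
  proof (intro conjI allI impI)
    show "finite S" by (fact finS)
    show "DomegaE r S h" by (rule char[THEN iffD2]) (use hol in \<open>simp add: S_def\<close>)
    fix E' assume "finite E' \<and> DomegaE r E' h"
    hence "\<forall>p. p \<notin> E' \<longrightarrow> reg r h p" using char[THEN iffD1] by blast
    thus "S \<subseteq> E'" by (auto simp: S_def)
  qed
  have bs: "bsing r h = S"
    unfolding bsing_def
  proof (rule the_equality)
    show "finite S \<and> DomegaE r S h \<and> (\<forall>E'. finite E' \<and> DomegaE r E' h \<longrightarrow> S \<subseteq> E')" by (fact PS)
    fix E1 assume "finite E1 \<and> DomegaE r E1 h \<and> (\<forall>E'. finite E' \<and> DomegaE r E' h \<longrightarrow> E1 \<subseteq> E')"
    hence "E1 \<subseteq> S" using PS by blast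
    moreover have "S \<subseteq> E1" using PS \<open>finite E1 \<and> DomegaE r E1 h \<and> _\<close> by blast
    ultimately show "E1 = S" by (rule equalityI)
  qed
  define \<psi> where "\<psi> = (\<lambda>t. inverse \<mu> * slash r a b c d h t - h t)"
  have reg\<psi>: "reg r \<psi> p" for p
  proof -
    have "DomegaE r {} \<psi>" using assms(7) unfolding Domega_def \<psi>_def .
    thus ?thesis using char[THEN iffD1] by blast
  qed
  have cl: "mob a b c d p \<in> S" if "p \<in> S" for p
  proof (rule ccontr)
    assume "mob a b c d p \<notin> S"
    hence "reg r h (mob a b c d p)" by (simp add: S_def)
    hence "reg r (slash r a b c d h) p" by (rule transport[OF assms(1)])
    hence "reg r (\<lambda>t. inverse \<mu> * slash r a b c d h t + (-1) * \<psi> t) p" using reg\<psi> by (rule reg_lin)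
    moreover have "(\<lambda>t. inverse \<mu> * slash r a b c d h t + (-1) * \<psi> t) = h" by (simp add: \<psi>_def)
    ultimately have "reg r h p" by simp
    thus False using that by (simp add: S_def)
  qed
  obtain H :: "real option \<Rightarrow> real" and \<delta> :: real where hd: "\<delta> \<noteq> 0 \<and> (\<forall>p. p \<noteq> \<aa> \<longrightarrow> mob a b c d p \<noteq> \<aa> \<and> H (mob a b c d p) = H p + \<delta>)"
    using parabolic_orbit[OF assms(1-4)] by blast
  have "S \<subseteq> {\<aa>}"
  proof (rule orbit_finite[of \<aa> "mob a b c d" H \<delta> S])
    show "\<And>p. p \<noteq> \<aa> \<Longrightarrow> mob a b c d p \<noteq> \<aa> \<and> H (mob a b c d p) = H p + \<delta>" using hd by blast
    show "\<delta> \<noteq> 0" using hd by blast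
    show "finite S" by (fact finS)
    show "\<And>p. p \<in> S \<Longrightarrow> mob a b c d p \<in> S" by (fact cl)
  qed
  thus ?thesis by (simp add: bs)
qed

end
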